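(* Let $n\ge2$, let $\Theta$ be a positive random variable with density and Laplace transform $f_\Theta^\star(s)=E[e^{-s\Theta}]$ satisfying $\int_0^\infty f_\Theta^\star(x)dx<\infty$, let $Z_1,\dots,Z_n$ be i.i.d. standard exponential and independent of $\Theta$ (the standing setup with $m=1$), $X_j=Z_j/\Theta$, $S_n=X_1+\cdots+X_n$, and $0<\kappa<1$. Then for each $i\in\{1,\dots,n\}$, $$TVaR_\kappa(X_i;S_n)=\frac{1}{1-\kappa}\sum_{\nu=1}^{n}(-1)^{\nu+1}\frac{VaR_\kappa(S_n)^{\nu}}{\nu!}f_\Theta^{\star(\nu-1)}\big(VaR_\kappa(S_n)\big)+\frac{1}{1-\kappa}\int_{VaR_\kappa(S_n)}^\infty f_\Theta^\star(x)\,dx.$$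
   Context: $f_\Theta^{\star(k)}$ denotes the $k$-th derivative of $f_\Theta^\star$. For $0<\kappa<1$, $VaR_\kappa(S_n)=\inf\{x:F_{S_n}(x)\ge\kappa\}$ with $F_{S_n}$ the cdf of $S_n$, and $TVaR_\kappa(X_i;S_n)=E[X_i\mid S_n>VaR_\kappa(S_n)]$. *)

theory Defs
  imports "HOL-Probability.Probability"
begin

definition cdf_rv :: "'a measure \<Rightarrow> ('a \<Rightarrow> real) \<Rightarrow> real \<Rightarrow> real" where
  "cdf_rv M X x = measure M {\<omega> \<in> space M. X \<omega> \<le> x}"

definition VaR :: "'a measure \<Rightarrow> real \<Rightarrow> ('a \<Rightarrow> real) \<Rightarrow> real" where
  "VaR M \<kappa> S = Inf {x. cdf_rv M S x \<ge> \<kappa>}"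

definition TVaR :: "'a measure \<Rightarrow> real \<Rightarrow> ('a \<Rightarrow> real) \<Rightarrow> ('a \<Rightarrow> real) \<Rightarrow> real" where
  "TVaR M \<kappa> X S =
     (let v = VaR M \<kappa> S;
          A = {\<omega> \<in> space M. S \<omega> > v}
      in (\<integral>\<omega>. X \<omega> * indicator A \<omega> \<partial>M) / measure M A)"

definition laplace_rv :: "'a measure \<Rightarrow> ('a \<Rightarrow> real) \<Rightarrow> real \<Rightarrow> real" where
  "laplace_rv M \<Theta> s = (\<integral>\<omega>. exp (- s * \<Theta> \<omega>) \<partial>M)"

end

theory Submission
  imports Defs "HOL-Real_Asymp.Real_Asymp"
begin


lemma pow_exp_bound:
  fixes x c :: real
  assumes "0 \<le> x" "0 < c"
  shows "x ^ m * exp (- c * x) \<le> fact m / c ^ m"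
proof -
  have "(c*x) ^ m / fact m \<le> (\<Sum>n\<le>m. (c*x) ^ n / fact n)"
    using assms by (intro member_le_sum) auto
  also have "\<dots> \<le> exp (c*x)"
    using assms summable_exp_generic[of "c * x"]
    by (auto simp: exp_def divide_inverse ac_simps intro!: sum_le_suminf)
  finally have h: "(c*x) ^ m / fact m \<le> exp (c*x)" .
  have "x ^ m * exp (- c * x) = (c*x)^m / fact m * (fact m / (c^m * exp (c*x)))"
    using assms by (simp add: exp_minus field_simps power_mult_distrib)
  also have "\<dots> \<le> exp (c*x) * (fact m / (c^m * exp (c*x)))"
    using h assms by (intro mult_right_mono) auto
  also have "\<dots> = fact m / c ^ m" using assms by (simp add: field_simps)
  finally show ?thesis .
qed

lemma exp_diff_bound:
  fixes a h t :: real
  assumes "0 \<le> t"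
  shows "\<bar>exp (- (a + h) * t) - exp (- a * t)\<bar> \<le> \<bar>h\<bar> * t * exp (- (a - \<bar>h\<bar>) * t)"
proof -
  have key: "\<And>p q. p \<le> q \<Longrightarrow> exp (- p * t) - exp (- q * t) \<le> (q - p) * t * exp (- p * t)"
  proof -
    fix p q :: real assume pq: "p \<le> q"
    have "1 - (q-p)*t \<le> exp (- ((q-p)*t))" using exp_ge_add_one_self[of "- ((q-p)*t)"] by simp
    hence "exp (-p*t) * (1 - (q-p)*t) \<le> exp (-p*t) * exp (- ((q-p)*t))" by (intro mult_left_mono) auto
    also have "exp (-p*t) * exp (- ((q-p)*t)) = exp (-q*t)" unfolding mult_exp_exp by (simp add: algebra_simps)
    finally show "exp (- p * t) - exp (- q * t) \<le> (q - p) * t * exp (- p * t)" by (simp add: algebra_simps)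
  qed
  have mono: "exp (- p * t) \<le> exp (- (a - \<bar>h\<bar>) * t)" if "a - \<bar>h\<bar> \<le> p" for p
  proof -
    have "(a - \<bar>h\<bar>) * t \<le> p * t" using that assms by (intro mult_right_mono) auto
    thus ?thesis by (simp add: algebra_simps)
  qed
  show ?thesis
  proof (cases "0 \<le> h")
    case True
    have "exp (- a * t) - exp (- (a + h) * t) \<le> h * t * exp (- a * t)" using key[of a "a+h"] True by simp
    also have "\<dots> \<le> h * t * exp (- (a - \<bar>h\<bar>) * t)" using True assms mono[of a] by (intro mult_left_mono) auto
    finally have 1: "exp (- a * t) - exp (- (a + h) * t) \<le> \<bar>h\<bar> * t * exp (- (a - \<bar>h\<bar>) * t)" using True by simp
    have "exp (- (a + h) * t) \<le> exp (- a * t)" using True assms mult_nonneg_nonneg[of h t] by (simp add: algebra_simps)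
    with 1 show ?thesis by simp
  next
    case False
    have "exp (- (a+h) * t) - exp (- a * t) \<le> (-h) * t * exp (- (a+h) * t)" using key[of "a+h" a] False by simp
    also have "\<dots> \<le> (-h) * t * exp (- (a - \<bar>h\<bar>) * t)" using False assms mono[of "a+h"] mult_nonneg_nonneg[of "-h" t] by (intro mult_left_mono) auto
    finally have 1: "exp (- (a + h) * t) - exp (- a * t) \<le> \<bar>h\<bar> * t * exp (- (a - \<bar>h\<bar>) * t)" using False by simp
    have "exp (- a * t) \<le> exp (- (a+h) * t)" using False assms mult_nonneg_nonneg[of "-h" t] by (simp add: algebra_simps)
    with 1 show ?thesis by simp
  qed
qed

lemma (in prob_space) G_integrable:
  fixes \<Theta> :: "'a \<Rightarrow> real" and s :: real
  assumes [measurable]: "\<Theta> \<in> borel_measurable M" and pos: "\<forall>\<omega>\<in>space M. \<Theta> \<omega> > 0" and s: "0 < s"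
  shows "integrable M (\<lambda>\<omega>. \<Theta> \<omega> ^ k * exp (- s * \<Theta> \<omega>))"
proof (rule integrable_const_bound[where B="fact k / s ^ k"])
  show "AE x in M. norm (\<Theta> x ^ k * exp (- s * \<Theta> x)) \<le> fact k / s ^ k"
    using pos pow_exp_bound[OF _ s] by (intro AE_I2) (auto simp: abs_mult less_imp_le)
qed simp

lemma (in prob_space) G_deriv:
  fixes \<Theta> :: "'a \<Rightarrow> real" and s :: real
  assumes [measurable]: "\<Theta> \<in> borel_measurable M" and pos: "\<forall>\<omega>\<in>space M. \<Theta> \<omega> > 0" and s: "0 < s"
  shows "((\<lambda>s. \<integral>\<omega>. \<Theta> \<omega> ^ k * exp (- s * \<Theta> \<omega>) \<partial>M) has_field_derivative
           - (\<integral>\<omega>. \<Theta> \<omega> ^ Suc k * exp (- s * \<Theta> \<omega>) \<partial>M)) (at s)"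
proof -
  define G where "G = (\<lambda>s. \<integral>\<omega>. \<Theta> \<omega> ^ k * exp (- s * \<Theta> \<omega>) \<partial>M)"
  define U where "U = {-s/2<..<s/2}"
  have "((\<lambda>h. (G (s + h) - G s) / h) \<longlongrightarrow> - (\<integral>\<omega>. \<Theta> \<omega> ^ Suc k * exp (- s * \<Theta> \<omega>) \<partial>M)) (at 0 within U)"
    unfolding tendsto_at_iff_sequentially
  proof (intro allI impI)
    fix X :: "nat \<Rightarrow> real" assume XU: "\<forall>i. X i \<in> U - {0}" and X0: "X \<longlonglongrightarrow> 0"
    have Xb: "\<bar>X i\<bar> < s/2" "X i \<noteq> 0" for i using XU[rule_format, of i] by (auto simp: U_def abs_less_iff)
    have eq: "(G (s + X i) - G s) / X i = (\<integral>\<omega>. \<Theta> \<omega> ^ k * (exp (- (s + X i) * \<Theta> \<omega>) - exp (- s * \<Theta> \<omega>)) / X i \<partial>M)" for i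
    proof -
      have "s + X i > 0" using Xb[of i] by auto
      then have "G (s + X i) - G s = (\<integral>\<omega>. \<Theta> \<omega> ^ k * exp (- (s + X i) * \<Theta> \<omega>) - \<Theta> \<omega> ^ k * exp (- s * \<Theta> \<omega>) \<partial>M)"
      proof -
        have i1: "integrable M (\<lambda>\<omega>. \<Theta> \<omega> ^ k * exp (- (s + X i) * \<Theta> \<omega>))"
          using \<open>s + X i > 0\<close> by (intro G_integrable pos) auto
        have i2: "integrable M (\<lambda>\<omega>. \<Theta> \<omega> ^ k * exp (- s * \<Theta> \<omega>))"
          using s by (intro G_integrable pos) auto
        show ?thesis unfolding G_def using Bochner_Integration.integral_diff[OF i1 i2] by simp
      qed
      then show ?thesis by (simp add: right_diff_distrib)
    qed
    have "(\<lambda>i. \<integral>\<omega>. \<Theta> \<omega> ^ k * (exp (- (s + X i) * \<Theta> \<omega>) - exp (- s * \<Theta> \<omega>)) / X i \<partial>M)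
        \<longlonglongrightarrow> (\<integral>\<omega>. \<Theta> \<omega> ^ k * (- \<Theta> \<omega> * exp (- s * \<Theta> \<omega>)) \<partial>M)"
    proof (rule integral_dominated_convergence[where w="\<lambda>\<omega>. \<Theta> \<omega> ^ Suc k * exp (- (s/2) * \<Theta> \<omega>)"])
      show "integrable M (\<lambda>\<omega>. \<Theta> \<omega> ^ Suc k * exp (- (s/2) * \<Theta> \<omega>))"
        using s by (intro G_integrable[OF _ pos]) auto
      show "AE \<omega> in M. (\<lambda>i. \<Theta> \<omega> ^ k * (exp (- (s + X i) * \<Theta> \<omega>) - exp (- s * \<Theta> \<omega>)) / X i)
              \<longlonglongrightarrow> \<Theta> \<omega> ^ k * (- \<Theta> \<omega> * exp (- s * \<Theta> \<omega>))"
      proof (intro AE_I2)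
        fix \<omega> assume "\<omega> \<in> space M"
        define t where "t = \<Theta> \<omega>"
        have "((\<lambda>x. exp (- x * t)) has_field_derivative (- t * exp (- s * t))) (at s)"
          by (auto intro!: derivative_eq_intros)
        then have "((\<lambda>h. (exp (- (s + h) * t) - exp (- s * t)) / h) \<longlongrightarrow> - t * exp (- s * t)) (at 0)"
          unfolding DERIV_def by simp
        then have "((\<lambda>h. (exp (- (s + h) * t) - exp (- s * t)) / h) \<circ> X) \<longlonglongrightarrow> - t * exp (- s * t)"
          unfolding tendsto_at_iff_sequentially using X0 Xb(2) by auto
        then have "(\<lambda>i. t ^ k * ((exp (- (s + X i) * t) - exp (- s * t)) / X i)) \<longlonglongrightarrow> t ^ k * (- t * exp (- s * t))"
          by (intro tendsto_mult_left) (simp add: o_def)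
        then show "(\<lambda>i. \<Theta> \<omega> ^ k * (exp (- (s + X i) * \<Theta> \<omega>) - exp (- s * \<Theta> \<omega>)) / X i)
              \<longlonglongrightarrow> \<Theta> \<omega> ^ k * (- \<Theta> \<omega> * exp (- s * \<Theta> \<omega>))"
          by (simp add: t_def)
      qed
      show "AE \<omega> in M. norm (\<Theta> \<omega> ^ k * (exp (- (s + X i) * \<Theta> \<omega>) - exp (- s * \<Theta> \<omega>)) / X i)
              \<le> \<Theta> \<omega> ^ Suc k * exp (- (s/2) * \<Theta> \<omega>)" for i
      proof (intro AE_I2)
        fix \<omega> assume "\<omega> \<in> space M"
        define t where "t = \<Theta> \<omega>"
        have t0: "t > 0" using pos \<open>\<omega> \<in> space M\<close> by (auto simp: t_def)
        have b1: "\<bar>exp (- (s + X i) * t) - exp (- s * t)\<bar> \<le> \<bar>X i\<bar> * t * exp (- (s - \<bar>X i\<bar>) * t)"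
          using exp_diff_bound[of t s "X i"] t0 by simp
        have b2: "exp (- (s - \<bar>X i\<bar>) * t) \<le> exp (- (s/2) * t)"
        proof -
          have "(s/2) * t \<le> (s - \<bar>X i\<bar>) * t" using Xb[of i] t0 by (intro mult_right_mono) auto
          then show ?thesis by (simp add: algebra_simps)
        qed
        have "norm (t ^ k * (exp (- (s + X i) * t) - exp (- s * t)) / X i)
             = t ^ k * \<bar>exp (- (s + X i) * t) - exp (- s * t)\<bar> / \<bar>X i\<bar>"
          using t0 by (simp add: abs_mult)
        also have "\<dots> \<le> t ^ k * (\<bar>X i\<bar> * t * exp (- (s - \<bar>X i\<bar>) * t)) / \<bar>X i\<bar>"
          using t0 b1 by (intro divide_right_mono mult_left_mono) auto
        also have "\<dots> = t ^ Suc k * exp (- (s - \<bar>X i\<bar>) * t)"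
          using Xb(2)[of i] by (simp add: field_simps)
        also have "\<dots> \<le> t ^ Suc k * exp (- (s/2) * t)"
          using t0 b2 by (intro mult_left_mono) auto
        finally show "norm (\<Theta> \<omega> ^ k * (exp (- (s + X i) * \<Theta> \<omega>) - exp (- s * \<Theta> \<omega>)) / X i)
              \<le> \<Theta> \<omega> ^ Suc k * exp (- (s/2) * \<Theta> \<omega>)" by (simp add: t_def)
      qed
    qed auto
    then show "((\<lambda>h. (G (s + h) - G s) / h) \<circ> X) \<longlonglongrightarrow> - (\<integral>\<omega>. \<Theta> \<omega> ^ Suc k * exp (- s * \<Theta> \<omega>) \<partial>M)"
      by (simp add: o_def eq mult.commute mult.left_commute)
  qed
  moreover have "at (0::real) within U = at 0" unfolding U_def using s by (intro at_within_open) auto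
  ultimately show ?thesis unfolding DERIV_def G_def by simp
qed

lemma (in prob_space) deriv_iter_laplace:
  fixes \<Theta> :: "'a \<Rightarrow> real"
  assumes [measurable]: "\<Theta> \<in> borel_measurable M" and pos: "\<forall>\<omega>\<in>space M. \<Theta> \<omega> > 0"
  shows "0 < s \<Longrightarrow> (deriv ^^ k) (laplace_rv M \<Theta>) s = (-1)^k * (\<integral>\<omega>. \<Theta> \<omega> ^ k * exp (- s * \<Theta> \<omega>) \<partial>M)"
proof (induction k arbitrary: s)
  case 0
  then show ?case by (simp add: laplace_rv_def)
next
  case (Suc k)
  have d: "((\<lambda>s. (-1)^k * (\<integral>\<omega>. \<Theta> \<omega> ^ k * exp (- s * \<Theta> \<omega>) \<partial>M)) has_field_derivative
      (-1)^k * - (\<integral>\<omega>. \<Theta> \<omega> ^ Suc k * exp (- s * \<Theta> \<omega>) \<partial>M)) (at s)"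
    by (intro DERIV_cmult G_deriv pos Suc.prems) simp
  have d2: "((deriv ^^ k) (laplace_rv M \<Theta>) has_field_derivative
      (-1)^k * - (\<integral>\<omega>. \<Theta> \<omega> ^ Suc k * exp (- s * \<Theta> \<omega>) \<partial>M)) (at s)"
    by (rule has_field_derivative_transform_within_open[OF d, where S="{0<..}"]) (use Suc in auto)
  show ?case using DERIV_imp_deriv[OF d2] by simp
qed

lemma exp_tail_integral:
  fixes t v :: real assumes t: "0 < t"
  shows "(\<integral>\<^sup>+x. ennreal (exp (- x * t)) * indicator {v<..} x \<partial>lborel) = ennreal (exp (- v * t) / t)"
proof -
  have "(\<integral>\<^sup>+x. ennreal (exp (- x * t)) * indicator {v<..} x \<partial>lborel)
      = (\<integral>\<^sup>+x. ennreal (exp (- x * t)) * indicator {v..} x \<partial>lborel)"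
    by (intro nn_integral_cong_AE) (use AE_lborel_singleton[of v] in \<open>auto elim!: eventually_mono split: split_indicator\<close>)
  also have "\<dots> = ennreal (0 - (- exp (- v * t) / t))"
  proof (rule nn_integral_FTC_atLeast)
    show "((\<lambda>x. - exp (- x * t) / t) has_real_derivative exp (- x * t)) (at x)" for x
      using t by (auto intro!: derivative_eq_intros)
    show "((\<lambda>x. - exp (- x * t) / t) \<longlongrightarrow> 0) at_top" using t by real_asymp
  qed auto
  finally show ?thesis by simp
qed

lemma (in prob_space) tail_laplace:
  fixes \<Theta> :: "'a \<Rightarrow> real"
  assumes [measurable]: "\<Theta> \<in> borel_measurable M" and pos: "\<forall>\<omega>\<in>space M. \<Theta> \<omega> > 0"
    and v: "0 < v" and si: "set_integrable lborel {0<..} (laplace_rv M \<Theta>)"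
  shows "(\<integral>\<^sup>+\<omega>. ennreal (exp (- v * \<Theta> \<omega>) / \<Theta> \<omega>) \<partial>M) = ennreal (LBINT x:{v<..}. laplace_rv M \<Theta> x)"
proof -
  interpret p: pair_sigma_finite M lborel
    unfolding pair_sigma_finite_def using prob_space_imp_sigma_finite[OF prob_space_axioms] lborel.sigma_finite_measure_axioms by auto
  have "(\<integral>\<^sup>+\<omega>. ennreal (exp (- v * \<Theta> \<omega>) / \<Theta> \<omega>) \<partial>M)
     = (\<integral>\<^sup>+\<omega>. (\<integral>\<^sup>+x. ennreal (exp (- x * \<Theta> \<omega>)) * indicator {v<..} x \<partial>lborel) \<partial>M)"
    by (intro nn_integral_cong) (use pos exp_tail_integral in force)
  also have "\<dots> = (\<integral>\<^sup>+x. (\<integral>\<^sup>+\<omega>. ennreal (exp (- x * \<Theta> \<omega>)) * indicator {v<..} x \<partial>M) \<partial>lborel)"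
    by (rule p.Fubini'[symmetric]) measurable
  also have "\<dots> = (\<integral>\<^sup>+x. ennreal (indicator {v<..} x * laplace_rv M \<Theta> x) \<partial>lborel)"
  proof (intro nn_integral_cong)
    fix x :: real
    show "(\<integral>\<^sup>+\<omega>. ennreal (exp (- x * \<Theta> \<omega>)) * indicator {v<..} x \<partial>M) = ennreal (indicator {v<..} x * laplace_rv M \<Theta> x)"
    proof (cases "v < x")
      case True
      have "integrable M (\<lambda>\<omega>. \<Theta> \<omega> ^ 0 * exp (- x * \<Theta> \<omega>))"
        using True v by (intro G_integrable pos) auto
      then have "(\<integral>\<^sup>+\<omega>. ennreal (exp (- x * \<Theta> \<omega>)) \<partial>M) = ennreal (laplace_rv M \<Theta> x)"
        unfolding laplace_rv_def by (intro nn_integral_eq_integral) auto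
      then show ?thesis using True by simp
    qed simp
  qed
  also have "\<dots> = ennreal (\<integral>x. indicator {v<..} x * laplace_rv M \<Theta> x \<partial>lborel)"
  proof (rule nn_integral_eq_integral)
    have "set_integrable lborel {v<..} (laplace_rv M \<Theta>)"
      by (rule set_integrable_subset[OF si]) (use v in auto)
    then show "integrable lborel (\<lambda>x. indicator {v<..} x * laplace_rv M \<Theta> x)"
      unfolding set_integrable_def by simp
    show "AE x in lborel. 0 \<le> indicator {v<..} x * laplace_rv M \<Theta> x"
      by (intro AE_I2 mult_nonneg_nonneg) (auto simp: laplace_rv_def)
  qed
  also have "\<dots> = ennreal (LBINT x:{v<..}. laplace_rv M \<Theta> x)"
    by (simp add: set_lebesgue_integral_def)
  finally show ?thesis .
qed

lemma (in prob_space) indep_vars_mono':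
  "indep_vars M' X I \<Longrightarrow> J \<subseteq> I \<Longrightarrow> indep_vars M' X J"
  unfolding indep_vars_def2 using indep_sets_mono_index by blast

lemma (in prob_space) setup_facts:
  fixes \<Theta> :: "'a \<Rightarrow> real" and Z :: "nat \<Rightarrow> 'a \<Rightarrow> real"
  assumes n: "n \<ge> 2"
    and Zd: "\<forall>j\<in>{1..n}. distributed M lborel (Z j) (exponential_density 1)"
    and ind: "indep_vars (\<lambda>_. borel) (\<lambda>j. if j = 0 then \<Theta> else Z j) {0..n}"
  shows "indep_var borel \<Theta> borel (\<lambda>\<omega>. \<Sum>j\<in>{1..n}. Z j \<omega>)"
    and "distributed M lborel (\<lambda>\<omega>. \<Sum>j\<in>{1..n}. Z j \<omega>) (erlang_density (n - 1) 1)"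
    and "\<And>i. i \<in> {1..n} \<Longrightarrow> indep_var (borel \<Otimes>\<^sub>M borel) (\<lambda>\<omega>. (\<Theta> \<omega>, 0::real)) (borel \<Otimes>\<^sub>M borel) (\<lambda>\<omega>. (Z i \<omega>, \<Sum>j\<in>{1..n}-{i}. Z j \<omega>))"
    and "\<And>i. i \<in> {1..n} \<Longrightarrow> indep_var borel (Z i) borel (\<lambda>\<omega>. \<Sum>j\<in>{1..n}-{i}. Z j \<omega>)"
    and "\<And>i. i \<in> {1..n} \<Longrightarrow> distributed M lborel (\<lambda>\<omega>. \<Sum>j\<in>{1..n}-{i}. Z j \<omega>) (erlang_density (n - 2) 1)"
proof -
  define X' where "X' = (\<lambda>j. if j = 0 then \<Theta> else Z j)"
  have indX: "indep_vars (\<lambda>_. borel) X' {0..n}" using ind by (simp add: X'_def)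
  have indZ: "indep_vars (\<lambda>_. borel) Z {1..n}"
  proof -
    have "indep_vars (\<lambda>_. borel) X' {1..n}" by (rule indep_vars_mono'[OF indX]) auto
    then show ?thesis by (rule indep_vars_cong[THEN iffD1, rotated 3]) (auto simp: X'_def)
  qed
  have "indep_var borel (X' 0) borel (\<lambda>\<omega>. \<Sum>j\<in>{1..n}. X' j \<omega>)"
  proof (rule indep_vars_sum)
    show "indep_vars (\<lambda>_. borel) X' (insert 0 {1..n})"
      using indX by (simp add: atLeast0_atMost_Suc_eq_insert_0[symmetric] atLeastAtMost_insertL)
  qed auto
  then show "indep_var borel \<Theta> borel (\<lambda>\<omega>. \<Sum>j\<in>{1..n}. Z j \<omega>)"
    by (simp add: X'_def)
  show "distributed M lborel (\<lambda>\<omega>. \<Sum>j\<in>{1..n}. Z j \<omega>) (erlang_density (n - 1) 1)"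
    using exponential_distributed_sum[of "{1..n}" 1 Z, OF _ _ _ _ indZ] Zd n by auto
  fix i assume i: "i \<in> {1..n}"
  show "indep_var borel (Z i) borel (\<lambda>\<omega>. \<Sum>j\<in>{1..n}-{i}. Z j \<omega>)"
  proof (rule indep_vars_sum)
    show "indep_vars (\<lambda>_. borel) Z (insert i ({1..n}-{i}))"
      using indZ i by (simp add: insert_absorb)
  qed auto
  show "distributed M lborel (\<lambda>\<omega>. \<Sum>j\<in>{1..n}-{i}. Z j \<omega>) (erlang_density (n - 2) 1)"
  proof -
    have "(if i = 1 then 2 else 1) \<in> {1..n} - {i}" using n i by auto
    then have "{1..n} - {i} \<noteq> {}" by blast
    moreover have "indep_vars (\<lambda>_. borel) Z ({1..n}-{i})" by (rule indep_vars_mono'[OF indZ]) auto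
    moreover have "card ({1..n}-{i}) - 1 = n - 2" using i by auto
    ultimately show ?thesis
      using exponential_distributed_sum[of "{1..n}-{i}" 1 Z] Zd by auto
  qed
  have r: "indep_var (PiM {0} (\<lambda>_. borel)) (\<lambda>\<omega>. restrict (\<lambda>j. X' j \<omega>) {0})
      (PiM {1..n} (\<lambda>_. borel)) (\<lambda>\<omega>. restrict (\<lambda>j. X' j \<omega>) {1..n})"
    by (rule indep_var_restrict[OF indX]) auto
  have "indep_var (borel \<Otimes>\<^sub>M borel) ((\<lambda>f. (f 0, 0::real)) \<circ> (\<lambda>\<omega>. restrict (\<lambda>j. X' j \<omega>) {0}))
      (borel \<Otimes>\<^sub>M borel) ((\<lambda>f. (f i, \<Sum>j\<in>{1..n}-{i}. f j)) \<circ> (\<lambda>\<omega>. restrict (\<lambda>j. X' j \<omega>) {1..n}))"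
  proof (rule indep_var_compose[OF r])
    show "(\<lambda>f. (f 0, 0::real)) \<in> measurable (PiM {0} (\<lambda>_. borel)) (borel \<Otimes>\<^sub>M (borel :: real measure))"
      by measurable
    show "(\<lambda>f. (f i, \<Sum>j\<in>{1..n}-{i}. f j)) \<in> measurable (PiM {1..n} (\<lambda>_. borel)) (borel \<Otimes>\<^sub>M (borel :: real measure))"
      using i by measurable
  qed
  also have "((\<lambda>f. (f 0, 0::real)) \<circ> (\<lambda>\<omega>. restrict (\<lambda>j. X' j \<omega>) {0})) = (\<lambda>\<omega>. (\<Theta> \<omega>, 0))"
    by (auto simp: X'_def)
  also have "((\<lambda>f. (f i, \<Sum>j\<in>{1..n}-{i}. f j)) \<circ> (\<lambda>\<omega>. restrict (\<lambda>j. X' j \<omega>) {1..n}))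
      = (\<lambda>\<omega>. (Z i \<omega>, \<Sum>j\<in>{1..n}-{i}. Z j \<omega>))"
    using i by (auto simp: X'_def fun_eq_iff intro!: sum.cong)
  finally show "indep_var (borel \<Otimes>\<^sub>M borel) (\<lambda>\<omega>. (\<Theta> \<omega>, 0::real)) (borel \<Otimes>\<^sub>M borel) (\<lambda>\<omega>. (Z i \<omega>, \<Sum>j\<in>{1..n}-{i}. Z j \<omega>))" .
qed

lemma erlang_tail_moment:
  fixes \<theta> v :: real and n :: nat
  assumes th: "0 < \<theta>" and v: "0 < v" and n: "1 \<le> n"
  shows "(\<integral>\<^sup>+t. ennreal (if v < t / \<theta> then t / \<theta> else 0) \<partial>density lborel (erlang_density (n - 1) 1))
       = ennreal (n / \<theta> * (\<Sum>k\<le>n. (v * \<theta>) ^ k * exp (- (v * \<theta>)) / fact k))"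
proof -
  define c where "c = v * \<theta>"
  have c: "0 < c" using th v by (simp add: c_def)
  interpret D: prob_space "density lborel (erlang_density n 1)" by (rule prob_space_erlang_density) simp
  have "(\<integral>\<^sup>+t. ennreal (if v < t / \<theta> then t / \<theta> else 0) \<partial>density lborel (erlang_density (n - 1) 1))
      = (\<integral>\<^sup>+t. ennreal (erlang_density (n - 1) 1 t) * ennreal (if v < t / \<theta> then t / \<theta> else 0) \<partial>lborel)"
    by (subst nn_integral_density) auto
  also have "\<dots> = (\<integral>\<^sup>+t. ennreal (n / \<theta>) * (ennreal (erlang_density n 1 t) * indicator {c<..} t) \<partial>lborel)"
  proof (intro nn_integral_cong)
    fix t :: real
    show "ennreal (erlang_density (n - 1) 1 t) * ennreal (if v < t / \<theta> then t / \<theta> else 0)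
        = ennreal (n / \<theta>) * (ennreal (erlang_density n 1 t) * indicator {c<..} t)"
    proof (cases "c < t")
      case True
      then have t0: "0 < t" using c by simp
      have vt: "v < t / \<theta>" using True th by (simp add: c_def field_simps)
      obtain m where m: "n = Suc m" using n by (cases n) auto
      have "erlang_density (n - 1) 1 t * (t / \<theta>) = n / \<theta> * erlang_density n 1 t"
      proof -
        have f: "(fact (Suc m) :: real) = real (Suc m) * fact m" by simp
        have "fact m > (0::real)" by simp
        then show ?thesis using t0 th unfolding m erlang_density_def f
          by (simp del: of_nat_Suc fact_Suc add: field_simps)
      qed
      then show ?thesis using True vt t0 th
        by (simp add: ennreal_mult'[symmetric] ennreal_mult[symmetric])
    next
      case False
      then have "\<not> v < t / \<theta>" using th by (simp add: c_def field_simps)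
      then show ?thesis using False by simp
    qed
  qed
  also have "\<dots> = ennreal (n / \<theta>) * (\<integral>\<^sup>+t. ennreal (erlang_density n 1 t) * indicator {c<..} t \<partial>lborel)"
    by (rule nn_integral_cmult) auto
  also have "(\<integral>\<^sup>+t. ennreal (erlang_density n 1 t) * indicator {c<..} t \<partial>lborel) = emeasure (density lborel (erlang_density n 1)) {c<..}"
    by (subst emeasure_density) auto
  also have "\<dots> = ennreal (1 - erlang_CDF n 1 c)"
  proof -
    have "emeasure (density lborel (erlang_density n 1)) {..c} = erlang_CDF n 1 c"
      by (rule emeasure_erlang_density) simp
    then have m1: "D.prob {..c} = erlang_CDF n 1 c"
      by (simp add: D.emeasure_eq_measure)
    have "D.prob {c<..} = D.prob (space (density lborel (erlang_density n 1)) - {..c})"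
      by (intro arg_cong[where f=D.prob]) auto
    also have "\<dots> = 1 - erlang_CDF n 1 c" using m1 by (subst D.prob_compl) auto
    finally show ?thesis by (simp add: D.emeasure_eq_measure)
  qed
  also have "1 - erlang_CDF n 1 c = (\<Sum>k\<le>n. c ^ k * exp (- c) / fact k)"
    using c by (simp add: erlang_CDF_def)
  finally show ?thesis using th by (simp add: c_def ennreal_mult'[symmetric] field_simps)
qed

lemma (in prob_space) main_num:
  fixes \<Theta> :: "'a \<Rightarrow> real" and Z :: "nat \<Rightarrow> 'a \<Rightarrow> real"
  assumes [measurable]: "\<Theta> \<in> borel_measurable M" and pos: "\<forall>\<omega>\<in>space M. \<Theta> \<omega> > 0"
    and n: "n \<ge> 2"
    and Zd: "\<forall>j\<in>{1..n}. distributed M lborel (Z j) (exponential_density 1)"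
    and ind: "indep_vars (\<lambda>_. borel) (\<lambda>j. if j = 0 then \<Theta> else Z j) {0..n}"
    and v: "0 < v" and i: "i \<in> {1..n}"
  shows "(\<integral>\<^sup>+\<omega>. ennreal (if v < (\<Sum>j=1..n. Z j \<omega> / \<Theta> \<omega>) then Z i \<omega> / \<Theta> \<omega> else 0) \<partial>M)
       = (\<integral>\<^sup>+\<omega>. ennreal ((\<Sum>k\<le>n. (v * \<Theta> \<omega>) ^ k * exp (- (v * \<Theta> \<omega>)) / fact k) / \<Theta> \<omega>) \<partial>M)"
proof -
  note facts = setup_facts[OF n Zd ind]
  have Zm: "Z j \<in> borel_measurable M" if "j \<in> {1..n}" for j
  proof -
    have "distributed M lborel (Z j) (exponential_density 1)" using Zd that by blast
    from distributed_measurable[OF this] show ?thesis by simp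
  qed
  have Zsm: "(\<lambda>\<omega>. \<Sum>j\<in>A. Z j \<omega>) \<in> borel_measurable M" if "A \<subseteq> {1..n}" for A
    using that Zm by (intro borel_measurable_sum) auto
  define W where "W = (\<lambda>i \<omega>. \<Sum>j\<in>{1..n}-{i}. Z j \<omega>)"
  define T where "T = (\<lambda>\<omega>. \<Sum>j\<in>{1..n}. Z j \<omega>)"
  have Wm: "W i \<in> borel_measurable M" for i unfolding W_def by (rule Zsm) auto
  have Tm[measurable]: "T \<in> borel_measurable M" unfolding T_def by (rule Zsm) auto
  have Sdecomp: "(\<Sum>j=1..n. Z j \<omega> / \<Theta> \<omega>) = (Z i \<omega> + W i \<omega>) / \<Theta> \<omega>" if "i \<in> {1..n}" for i \<omega>
    using that by (simp add: W_def sum_divide_distrib[symmetric] sum.remove)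
  have ST: "(\<Sum>j=1..n. Z j \<omega> / \<Theta> \<omega>) = T \<omega> / \<Theta> \<omega>" for \<omega>
    by (simp add: T_def sum_divide_distrib[symmetric])
  define Q where "Q = distr M (borel \<Otimes>\<^sub>M borel) (\<lambda>\<omega>. (\<Theta> \<omega>, 0::real)) \<Otimes>\<^sub>M
      (density lborel (exponential_density 1) \<Otimes>\<^sub>M density lborel (erlang_density (n - 2) 1))"
  define g :: "(real \<times> real) \<times> (real \<times> real) \<Rightarrow> ennreal" where
    "g = (\<lambda>p. ennreal (if v < (fst (snd p) + snd (snd p)) / fst (fst p) then fst (snd p) / fst (fst p) else 0))"
  have gm: "g \<in> borel_measurable ((borel \<Otimes>\<^sub>M borel) \<Otimes>\<^sub>M (borel \<Otimes>\<^sub>M borel))"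
    unfolding g_def by measurable
  have Ei: "(\<integral>\<^sup>+\<omega>. ennreal (if v < (\<Sum>j=1..n. Z j \<omega> / \<Theta> \<omega>) then Z i \<omega> / \<Theta> \<omega> else 0) \<partial>M) = integral\<^sup>N Q g"
    if i: "i \<in> {1..n}" for i
  proof -
    have Zim[measurable]: "Z i \<in> borel_measurable M" using Zm i by auto
    have Wim[measurable]: "W i \<in> borel_measurable M" by (rule Wm)
    have mp: "(\<lambda>\<omega>. ((\<Theta> \<omega>, 0::real), (Z i \<omega>, W i \<omega>))) \<in> measurable M ((borel \<Otimes>\<^sub>M borel) \<Otimes>\<^sub>M (borel \<Otimes>\<^sub>M borel))"
      by measurable
    have d1: "distr M ((borel \<Otimes>\<^sub>M borel) \<Otimes>\<^sub>M (borel \<Otimes>\<^sub>M borel)) (\<lambda>\<omega>. ((\<Theta> \<omega>, 0::real), (Z i \<omega>, W i \<omega>)))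
        = distr M (borel \<Otimes>\<^sub>M borel) (\<lambda>\<omega>. (\<Theta> \<omega>, 0::real)) \<Otimes>\<^sub>M distr M (borel \<Otimes>\<^sub>M borel) (\<lambda>\<omega>. (Z i \<omega>, W i \<omega>))"
      using facts(3)[OF i] unfolding indep_var_distribution_eq W_def by simp
    have d2: "distr M (borel \<Otimes>\<^sub>M borel) (\<lambda>\<omega>. (Z i \<omega>, W i \<omega>)) = distr M borel (Z i) \<Otimes>\<^sub>M distr M borel (W i)"
      using facts(4)[OF i] unfolding indep_var_distribution_eq W_def by simp
    have d3: "distr M borel (Z i) = density lborel (exponential_density 1)"
    proof -
      have "distr M borel (Z i) = distr M lborel (Z i)" by (rule distr_cong) auto
      also have "\<dots> = density lborel (exponential_density 1)"
        using Zd i distributed_distr_eq_density by blast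
      finally show ?thesis .
    qed
    have d4: "distr M borel (W i) = density lborel (erlang_density (n - 2) 1)"
    proof -
      have "distr M borel (W i) = distr M lborel (W i)" by (rule distr_cong) auto
      also have "\<dots> = density lborel (erlang_density (n - 2) 1)"
        using facts(5)[OF i] distributed_distr_eq_density unfolding W_def by blast
      finally show ?thesis .
    qed
    have "(\<integral>\<^sup>+\<omega>. ennreal (if v < (\<Sum>j=1..n. Z j \<omega> / \<Theta> \<omega>) then Z i \<omega> / \<Theta> \<omega> else 0) \<partial>M)
        = (\<integral>\<^sup>+\<omega>. g ((\<Theta> \<omega>, 0), (Z i \<omega>, W i \<omega>)) \<partial>M)"
      by (intro nn_integral_cong) (simp only: g_def Sdecomp[OF i] fst_conv snd_conv)
    also have "\<dots> = integral\<^sup>N (distr M ((borel \<Otimes>\<^sub>M borel) \<Otimes>\<^sub>M (borel \<Otimes>\<^sub>M borel)) (\<lambda>\<omega>. ((\<Theta> \<omega>, 0::real), (Z i \<omega>, W i \<omega>)))) g"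
      using gm mp by (subst nn_integral_distr) auto
    also have "\<dots> = integral\<^sup>N Q g" unfolding d1 d2 d3 d4 Q_def ..
    finally show ?thesis .
  qed
  have Znn: "AE \<omega> in M. \<forall>j\<in>{1..n}. 0 \<le> Z j \<omega>"
  proof (intro AE_finite_allI)
    fix j assume j: "j \<in> {1..n}"
    have D: "distributed M lborel (Z j) (exponential_density 1)" using Zd j by blast
    have "AE x in lborel. 0 < ennreal (exponential_density 1 x) \<longrightarrow> 0 \<le> x"
      by (intro AE_I2) (auto simp: exponential_density_def)
    then show "AE \<omega> in M. 0 \<le> Z j \<omega>"
      using distributed_AE2[OF D, of "\<lambda>x. 0 \<le> x"] by simp
  qed simp
  have sumE: "(\<Sum>i'\<in>{1..n}. \<integral>\<^sup>+\<omega>. ennreal (if v < (\<Sum>j=1..n. Z j \<omega> / \<Theta> \<omega>) then Z i' \<omega> / \<Theta> \<omega> else 0) \<partial>M)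
      = (\<integral>\<^sup>+\<omega>. ennreal (if v < T \<omega> / \<Theta> \<omega> then T \<omega> / \<Theta> \<omega> else 0) \<partial>M)"
  proof -
    have "(\<Sum>i'\<in>{1..n}. \<integral>\<^sup>+\<omega>. ennreal (if v < (\<Sum>j=1..n. Z j \<omega> / \<Theta> \<omega>) then Z i' \<omega> / \<Theta> \<omega> else 0) \<partial>M)
      = (\<Sum>i'\<in>{1..n}. \<integral>\<^sup>+\<omega>. ennreal (if v < T \<omega> / \<Theta> \<omega> then Z i' \<omega> / \<Theta> \<omega> else 0) \<partial>M)"
      by (simp only: ST)
    also have "\<dots> = (\<integral>\<^sup>+\<omega>. (\<Sum>i'\<in>{1..n}. ennreal (if v < T \<omega> / \<Theta> \<omega> then Z i' \<omega> / \<Theta> \<omega> else 0)) \<partial>M)"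
    proof (rule nn_integral_sum[symmetric])
      fix i' assume i': "i' \<in> {1..n}"
      note [measurable] = Zm[OF i']
      show "(\<lambda>\<omega>. ennreal (if v < T \<omega> / \<Theta> \<omega> then Z i' \<omega> / \<Theta> \<omega> else 0)) \<in> borel_measurable M"
        by measurable
    qed
    also have "\<dots> = (\<integral>\<^sup>+\<omega>. ennreal (if v < T \<omega> / \<Theta> \<omega> then T \<omega> / \<Theta> \<omega> else 0) \<partial>M)"
    proof (intro nn_integral_cong_AE)
      show "AE \<omega> in M. (\<Sum>i'\<in>{1..n}. ennreal (if v < T \<omega> / \<Theta> \<omega> then Z i' \<omega> / \<Theta> \<omega> else 0))
          = ennreal (if v < T \<omega> / \<Theta> \<omega> then T \<omega> / \<Theta> \<omega> else 0)"
        using Znn AE_space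
      proof eventually_elim
        case (elim \<omega>)
        then have th: "0 < \<Theta> \<omega>" using pos by auto
        have "(\<Sum>i'\<in>{1..n}. ennreal (if v < T \<omega> / \<Theta> \<omega> then Z i' \<omega> / \<Theta> \<omega> else 0))
            = ennreal (\<Sum>i'\<in>{1..n}. (if v < T \<omega> / \<Theta> \<omega> then Z i' \<omega> / \<Theta> \<omega> else 0))"
          using elim th by (intro sum_ennreal) auto
        also have "(\<Sum>i'\<in>{1..n}. (if v < T \<omega> / \<Theta> \<omega> then Z i' \<omega> / \<Theta> \<omega> else 0))
            = (if v < T \<omega> / \<Theta> \<omega> then T \<omega> / \<Theta> \<omega> else 0)"
          by (simp add: T_def sum_divide_distrib[symmetric])
        finally show ?case .
      qed
    qed
    finally show ?thesis .
  qed
  have ES: "(\<integral>\<^sup>+\<omega>. ennreal (if v < T \<omega> / \<Theta> \<omega> then T \<omega> / \<Theta> \<omega> else 0) \<partial>M)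
      = (\<integral>\<^sup>+\<omega>. ennreal (n / \<Theta> \<omega> * (\<Sum>k\<le>n. (v * \<Theta> \<omega>) ^ k * exp (- (v * \<Theta> \<omega>)) / fact k)) \<partial>M)"
  proof -
    define h :: "real \<times> real \<Rightarrow> ennreal" where
      "h = (\<lambda>p. ennreal (if v < snd p / fst p then snd p / fst p else 0))"
    have hm[measurable]: "h \<in> borel_measurable (borel \<Otimes>\<^sub>M borel)" unfolding h_def by measurable
    have dT: "distr M borel T = density lborel (erlang_density (n - 1) 1)"
    proof -
      have "distr M borel T = distr M lborel T" by (rule distr_cong) auto
      also have "\<dots> = density lborel (erlang_density (n - 1) 1)"
        using facts(2) distributed_distr_eq_density unfolding T_def by blast
      finally show ?thesis .
    qed
    have dj: "distr M (borel \<Otimes>\<^sub>M borel) (\<lambda>\<omega>. (\<Theta> \<omega>, T \<omega>)) = distr M borel \<Theta> \<Otimes>\<^sub>M density lborel (erlang_density (n - 1) 1)"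
      using facts(1) unfolding indep_var_distribution_eq T_def[symmetric] dT by simp
    interpret E: prob_space "density lborel (erlang_density (n - 1) 1)"
      by (rule prob_space_erlang_density) simp
    have sfE: "sigma_finite_measure (density lborel (erlang_density (n - 1) 1))"
      by (rule prob_space_imp_sigma_finite) (rule E.prob_space_axioms)
    have "(\<integral>\<^sup>+\<omega>. ennreal (if v < T \<omega> / \<Theta> \<omega> then T \<omega> / \<Theta> \<omega> else 0) \<partial>M) = (\<integral>\<^sup>+\<omega>. h (\<Theta> \<omega>, T \<omega>) \<partial>M)"
      by (simp only: h_def fst_conv snd_conv)
    also have "\<dots> = integral\<^sup>N (distr M (borel \<Otimes>\<^sub>M borel) (\<lambda>\<omega>. (\<Theta> \<omega>, T \<omega>))) h"
      by (subst nn_integral_distr) auto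
    also have "\<dots> = (\<integral>\<^sup>+\<theta>. \<integral>\<^sup>+t. h (\<theta>, t) \<partial>density lborel (erlang_density (n - 1) 1) \<partial>distr M borel \<Theta>)"
      unfolding dj by (rule sigma_finite_measure.nn_integral_fst[OF sfE, symmetric]) simp
    also have "\<dots> = (\<integral>\<^sup>+\<theta>. ennreal (n / \<theta> * (\<Sum>k\<le>n. (v * \<theta>) ^ k * exp (- (v * \<theta>)) / fact k)) \<partial>distr M borel \<Theta>)"
    proof (intro nn_integral_cong_AE)
      have "AE \<theta> in distr M borel \<Theta>. 0 < \<theta>"
        using pos by (subst AE_distr_iff) (auto intro!: AE_I2)
      then show "AE \<theta> in distr M borel \<Theta>. (\<integral>\<^sup>+t. h (\<theta>, t) \<partial>density lborel (erlang_density (n - 1) 1))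
          = ennreal (n / \<theta> * (\<Sum>k\<le>n. (v * \<theta>) ^ k * exp (- (v * \<theta>)) / fact k))"
      proof eventually_elim
        case (elim \<theta>)
        show ?case unfolding h_def fst_conv snd_conv using erlang_tail_moment[of \<theta> v n] elim v n by simp
      qed
    qed
    also have "\<dots> = (\<integral>\<^sup>+\<omega>. ennreal (n / \<Theta> \<omega> * (\<Sum>k\<le>n. (v * \<Theta> \<omega>) ^ k * exp (- (v * \<Theta> \<omega>)) / fact k)) \<partial>M)"
      by (subst nn_integral_distr) auto
    finally show ?thesis .
  qed
  have "ennreal n * integral\<^sup>N Q g = (\<Sum>i'\<in>{1..n}. integral\<^sup>N Q g)" by (simp add: ennreal_of_nat_eq_real_of_nat)
  also have "\<dots> = (\<Sum>i'\<in>{1..n}. \<integral>\<^sup>+\<omega>. ennreal (if v < (\<Sum>j=1..n. Z j \<omega> / \<Theta> \<omega>) then Z i' \<omega> / \<Theta> \<omega> else 0) \<partial>M)"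
    using Ei by (intro sum.cong) auto
  also have "\<dots> = (\<integral>\<^sup>+\<omega>. ennreal n * ennreal ((\<Sum>k\<le>n. (v * \<Theta> \<omega>) ^ k * exp (- (v * \<Theta> \<omega>)) / fact k) / \<Theta> \<omega>) \<partial>M)"
    unfolding sumE ES by (intro nn_integral_cong) (simp add: ennreal_mult'[symmetric] divide_inverse ac_simps)
  also have "\<dots> = ennreal n * (\<integral>\<^sup>+\<omega>. ennreal ((\<Sum>k\<le>n. (v * \<Theta> \<omega>) ^ k * exp (- (v * \<Theta> \<omega>)) / fact k) / \<Theta> \<omega>) \<partial>M)"
    by (rule nn_integral_cmult) measurable
  finally have "integral\<^sup>N Q g = (\<integral>\<^sup>+\<omega>. ennreal ((\<Sum>k\<le>n. (v * \<Theta> \<omega>) ^ k * exp (- (v * \<Theta> \<omega>)) / fact k) / \<Theta> \<omega>) \<partial>M)"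
    using n by (simp add: ennreal_mult_cancel_left)
  then show ?thesis using Ei[OF i] by simp
qed

lemma (in prob_space) var_part:
  fixes \<Theta> :: "'a \<Rightarrow> real" and Z :: "nat \<Rightarrow> 'a \<Rightarrow> real"
  assumes [measurable]: "\<Theta> \<in> borel_measurable M" and pos: "\<forall>\<omega>\<in>space M. \<Theta> \<omega> > 0"
    and n: "n \<ge> 2"
    and Zd: "\<forall>j\<in>{1..n}. distributed M lborel (Z j) (exponential_density 1)"
    and ind: "indep_vars (\<lambda>_. borel) (\<lambda>j. if j = 0 then \<Theta> else Z j) {0..n}"
    and k0: "0 < \<kappa>" and k1: "\<kappa> < 1"
  shows "0 < VaR M \<kappa> (\<lambda>\<omega>. \<Sum>j=1..n. Z j \<omega> / \<Theta> \<omega>)"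
    and "prob {\<omega> \<in> space M. VaR M \<kappa> (\<lambda>\<omega>. \<Sum>j=1..n. Z j \<omega> / \<Theta> \<omega>) < (\<Sum>j=1..n. Z j \<omega> / \<Theta> \<omega>)} = 1 - \<kappa>"
proof -
  note facts = setup_facts[OF n Zd ind]
  have Zm: "Z j \<in> borel_measurable M" if "j \<in> {1..n}" for j
  proof -
    have "distributed M lborel (Z j) (exponential_density 1)" using Zd that by blast
    from distributed_measurable[OF this] show ?thesis by simp
  qed
  define T where "T = (\<lambda>\<omega>. \<Sum>j\<in>{1..n}. Z j \<omega>)"
  have Tm[measurable]: "T \<in> borel_measurable M" unfolding T_def using Zm by (intro borel_measurable_sum) auto
  define S where "S = (\<lambda>\<omega>. \<Sum>j=1..n. Z j \<omega> / \<Theta> \<omega>)"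
  have ST: "S \<omega> = T \<omega> / \<Theta> \<omega>" for \<omega>
    by (simp add: S_def T_def sum_divide_distrib[symmetric])
  have Sm[measurable]: "S \<in> borel_measurable M" unfolding ST[abs_def] by measurable
  define D where "D = distr M borel S"
  interpret D: real_distribution D unfolding D_def by (intro real_distribution_distr) simp
  have Fdef: "cdf_rv M S x = cdf D x" for x
    unfolding cdf_rv_def cdf_def2 D_def by (subst measure_distr) (auto intro!: arg_cong[where f="measure M"])
  have TD: "distributed M lborel T (erlang_density (n - 1) 1)" using facts(2) unfolding T_def .
  have dT: "distr M borel T = density lborel (erlang_density (n - 1) 1)"
  proof -
    have "distr M borel T = distr M lborel T" by (rule distr_cong) auto
    also have "\<dots> = density lborel (erlang_density (n - 1) 1)"
      using TD distributed_distr_eq_density by blast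
    finally show ?thesis .
  qed
  have dj: "distr M (borel \<Otimes>\<^sub>M borel) (\<lambda>\<omega>. (\<Theta> \<omega>, T \<omega>)) = distr M borel \<Theta> \<Otimes>\<^sub>M density lborel (erlang_density (n - 1) 1)"
    using facts(1) unfolding indep_var_distribution_eq T_def[symmetric] dT by simp
  interpret E: prob_space "density lborel (erlang_density (n - 1) 1)"
    by (rule prob_space_erlang_density) simp
  have sfE: "sigma_finite_measure (density lborel (erlang_density (n - 1) 1))"
    by (rule prob_space_imp_sigma_finite) (rule E.prob_space_axioms)
  have atom: "measure D {x} = 0" for x
  proof -
    define A where "A = {p :: real \<times> real. snd p = x * fst p}"
    have "Measurable.pred (borel \<Otimes>\<^sub>M borel) (\<lambda>p::real \<times> real. snd p = x * fst p)" by measurable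
    then have Am: "A \<in> sets (borel \<Otimes>\<^sub>M borel)" unfolding A_def pred_def by (simp add: space_pair_measure)
    have m1: "measure D {x} = measure M {\<omega> \<in> space M. (\<Theta> \<omega>, T \<omega>) \<in> A}"
      unfolding D_def using pos
      by (subst measure_distr) (auto simp: A_def ST field_simps intro!: arg_cong[where f="measure M"])
    have "emeasure M {\<omega> \<in> space M. (\<Theta> \<omega>, T \<omega>) \<in> A} = emeasure (distr M (borel \<Otimes>\<^sub>M borel) (\<lambda>\<omega>. (\<Theta> \<omega>, T \<omega>))) A"
      using Am by (subst emeasure_distr) (auto intro!: arg_cong[where f="emeasure M"])
    also have "\<dots> = (\<integral>\<^sup>+\<theta>. emeasure (density lborel (erlang_density (n - 1) 1)) (Pair \<theta> -` A) \<partial>distr M borel \<Theta>)"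
      unfolding dj by (rule sigma_finite_measure.emeasure_pair_measure_alt[OF sfE]) (use Am in simp)
    also have "\<dots> = (\<integral>\<^sup>+\<theta>. 0 \<partial>distr M borel \<Theta>)"
    proof (intro nn_integral_cong)
      fix \<theta> :: real
      have "Pair \<theta> -` A = {x * \<theta>}" by (auto simp: A_def)
      moreover have "emeasure (density lborel (erlang_density (n - 1) 1)) {x * \<theta>} = 0"
      proof -
        have "emeasure (density lborel (erlang_density (n - 1) 1)) {x * \<theta>}
            = (\<integral>\<^sup>+t. ennreal (erlang_density (n - 1) 1 t) * indicator {x * \<theta>} t \<partial>lborel)"
          by (subst emeasure_density) auto
        also have "\<dots> = 0"
          by (subst nn_integral_0_iff_AE) (use AE_lborel_singleton[of "x * \<theta>"] in \<open>auto elim!: eventually_mono\<close>)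
        finally show ?thesis .
      qed
      ultimately show "emeasure (density lborel (erlang_density (n - 1) 1)) (Pair \<theta> -` A) = 0" by simp
    qed
    finally have "emeasure M {\<omega> \<in> space M. (\<Theta> \<omega>, T \<omega>) \<in> A} = 0" by simp
    then show ?thesis using m1 by (simp add: measure_def)
  qed
  have cont: "isCont (cdf D) x" for x using atom D.isCont_cdf by simp
  have F0: "cdf D 0 = 0"
  proof -
    have "cdf D 0 = prob {\<omega> \<in> space M. T \<omega> \<le> 0}"
      unfolding cdf_def2 D_def using pos
      by (subst measure_distr) (auto simp: ST divide_le_0_iff intro!: arg_cong[where f="measure M"])
    also have "\<dots> = erlang_CDF (n - 1) 1 0" by (rule erlang_distributed_le[OF TD]) auto
    finally show ?thesis by (simp add: erlang_CDF_at0)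
  qed
  have Fneg: "cdf D x = 0" if "x \<le> 0" for x
    using D.cdf_nondecreasing[OF that] D.cdf_nonneg[of x] F0 by simp
  define K where "K = {x. \<kappa> \<le> cdf D x}"
  have VaR_eq: "VaR M \<kappa> S = Inf K" unfolding VaR_def K_def Fdef ..
  have Kpos: "x \<in> K \<Longrightarrow> 0 < x" for x using Fneg[of x] k0 by (force simp: K_def)
  have Kne: "K \<noteq> {}"
  proof -
    have "eventually (\<lambda>x. \<kappa> < cdf D x) at_top"
      using order_tendstoD(1)[OF D.cdf_lim_at_top_prob k1] .
    then obtain x where "\<kappa> < cdf D x" by (auto simp: eventually_at_top_linorder)
    then show ?thesis unfolding K_def using less_imp_le by blast
  qed
  have Kbdd: "bdd_below K" using Kpos by (intro bdd_belowI[of _ 0]) force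
  have Kcl: "closed K"
    unfolding K_def using cont by (intro closed_Collect_le continuous_on_const continuous_at_imp_continuous_on) auto
  have vK: "Inf K \<in> K" by (rule closed_contains_Inf[OF Kne Kbdd Kcl])
  show "0 < VaR M \<kappa> (\<lambda>\<omega>. \<Sum>j=1..n. Z j \<omega> / \<Theta> \<omega>)"
    using Kpos[OF vK] VaR_eq unfolding S_def by simp
  have Fv: "cdf D (Inf K) = \<kappa>"
  proof (rule antisym)
    show "\<kappa> \<le> cdf D (Inf K)" using vK by (simp add: K_def)
    show "cdf D (Inf K) \<le> \<kappa>"
    proof (rule ccontr)
      assume "\<not> cdf D (Inf K) \<le> \<kappa>"
      then have gt: "\<kappa> < cdf D (Inf K)" by simp
      have "(cdf D \<longlongrightarrow> cdf D (Inf K)) (at_left (Inf K))"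
        using cont[of "Inf K"] by (simp add: isCont_def filterlim_at_split)
      from order_tendstoD(1)[OF this gt] obtain b where b: "b < Inf K" "\<And>y. b < y \<Longrightarrow> y < Inf K \<Longrightarrow> \<kappa> < cdf D y"
        by (auto simp: eventually_at_left_field)
      define y where "y = (b + Inf K) / 2"
      have "y \<in> K" using b by (auto simp: K_def y_def intro!: less_imp_le)
      then have "Inf K \<le> y" using Kbdd by (rule cInf_lower)
      then show False using b by (simp add: y_def)
    qed
  qed
  have "prob {\<omega> \<in> space M. Inf K < S \<omega>} = prob (space M - {\<omega> \<in> space M. S \<omega> \<le> Inf K})"
    by (intro arg_cong[where f=prob]) auto
  also have "\<dots> = 1 - prob {\<omega> \<in> space M. S \<omega> \<le> Inf K}" by (rule prob_compl) measurable
  also have "prob {\<omega> \<in> space M. S \<omega> \<le> Inf K} = cdf D (Inf K)"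
    unfolding cdf_def2 D_def by (subst measure_distr) (auto intro!: arg_cong[where f="measure M"])
  finally show "prob {\<omega> \<in> space M. VaR M \<kappa> (\<lambda>\<omega>. \<Sum>j=1..n. Z j \<omega> / \<Theta> \<omega>) < (\<Sum>j=1..n. Z j \<omega> / \<Theta> \<omega>)} = 1 - \<kappa>"
    using Fv VaR_eq unfolding S_def by simp
qed

lemma (in prob_space) sum_eval:
  fixes \<Theta> :: "'a \<Rightarrow> real"
  assumes [measurable]: "\<Theta> \<in> borel_measurable M" and pos: "\<forall>\<omega>\<in>space M. \<Theta> \<omega> > 0"
    and v: "0 < v" and si: "set_integrable lborel {0<..} (laplace_rv M \<Theta>)"
  shows "(\<integral>\<^sup>+\<omega>. ennreal ((\<Sum>k\<le>n. (v * \<Theta> \<omega>) ^ k * exp (- (v * \<Theta> \<omega>)) / fact k) / \<Theta> \<omega>) \<partial>M)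
    = ennreal ((LBINT x:{v<..}. laplace_rv M \<Theta> x) + (\<Sum>k=1..n. v ^ k / fact k * (\<integral>\<omega>. \<Theta> \<omega> ^ (k - 1) * exp (- v * \<Theta> \<omega>) \<partial>M)))"
proof -
  define b where "b = (\<lambda>k \<omega>. v ^ k / fact k * (\<Theta> \<omega> ^ (k - 1) * exp (- v * \<Theta> \<omega>)))"
  have bnn: "0 \<le> b k \<omega>" if "\<omega> \<in> space M" for k \<omega>
    using that pos v unfolding b_def by (intro mult_nonneg_nonneg) auto
  have pw: "(\<Sum>k\<le>n. (v * \<Theta> \<omega>) ^ k * exp (- (v * \<Theta> \<omega>)) / fact k) / \<Theta> \<omega>
      = exp (- v * \<Theta> \<omega>) / \<Theta> \<omega> + (\<Sum>k\<in>{1..n}. b k \<omega>)" if "\<omega> \<in> space M" for \<omega>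
  proof -
    have th: "\<Theta> \<omega> > 0" using pos that by auto
    have "{..n} = insert 0 {1..n}" by auto
    then have "(\<Sum>k\<le>n. (v * \<Theta> \<omega>) ^ k * exp (- (v * \<Theta> \<omega>)) / fact k)
        = exp (- (v * \<Theta> \<omega>)) + (\<Sum>k\<in>{1..n}. (v * \<Theta> \<omega>) ^ k * exp (- (v * \<Theta> \<omega>)) / fact k)"
      by simp
    moreover have "(\<Sum>k\<in>{1..n}. (v * \<Theta> \<omega>) ^ k * exp (- (v * \<Theta> \<omega>)) / fact k) / \<Theta> \<omega> = (\<Sum>k\<in>{1..n}. b k \<omega>)"
      unfolding sum_divide_distrib
    proof (intro sum.cong refl)
      fix k assume "k \<in> {1..n}"
      then obtain m where m: "k = Suc m" by (cases k) auto
      show "(v * \<Theta> \<omega>) ^ k * exp (- (v * \<Theta> \<omega>)) / fact k / \<Theta> \<omega> = b k \<omega>"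
        unfolding b_def m using th by (simp add: power_mult_distrib field_simps del: fact_Suc)
    qed
    ultimately show ?thesis by (simp add: add_divide_distrib)
  qed
  have "(\<integral>\<^sup>+\<omega>. ennreal ((\<Sum>k\<le>n. (v * \<Theta> \<omega>) ^ k * exp (- (v * \<Theta> \<omega>)) / fact k) / \<Theta> \<omega>) \<partial>M)
      = (\<integral>\<^sup>+\<omega>. ennreal (exp (- v * \<Theta> \<omega>) / \<Theta> \<omega>) + (\<Sum>k\<in>{1..n}. ennreal (b k \<omega>)) \<partial>M)"
  proof (intro nn_integral_cong)
    fix \<omega> assume om: "\<omega> \<in> space M"
    then have "0 \<le> exp (- v * \<Theta> \<omega>) / \<Theta> \<omega>" using pos by auto
    then show "ennreal ((\<Sum>k\<le>n. (v * \<Theta> \<omega>) ^ k * exp (- (v * \<Theta> \<omega>)) / fact k) / \<Theta> \<omega>)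
        = ennreal (exp (- v * \<Theta> \<omega>) / \<Theta> \<omega>) + (\<Sum>k\<in>{1..n}. ennreal (b k \<omega>))"
      using pw[OF om] bnn[OF om] by (simp add: ennreal_plus sum_nonneg)
  qed
  also have "\<dots> = (\<integral>\<^sup>+\<omega>. ennreal (exp (- v * \<Theta> \<omega>) / \<Theta> \<omega>) \<partial>M) + (\<Sum>k\<in>{1..n}. \<integral>\<^sup>+\<omega>. ennreal (b k \<omega>) \<partial>M)"
    by (subst nn_integral_add) (auto simp: b_def intro!: nn_integral_sum)
  also have "(\<integral>\<^sup>+\<omega>. ennreal (exp (- v * \<Theta> \<omega>) / \<Theta> \<omega>) \<partial>M) = ennreal (LBINT x:{v<..}. laplace_rv M \<Theta> x)"
    by (rule tail_laplace[OF _ pos v si]) simp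
  also have "(\<Sum>k\<in>{1..n}. \<integral>\<^sup>+\<omega>. ennreal (b k \<omega>) \<partial>M)
      = (\<Sum>k\<in>{1..n}. ennreal (v ^ k / fact k * (\<integral>\<omega>. \<Theta> \<omega> ^ (k - 1) * exp (- v * \<Theta> \<omega>) \<partial>M)))"
  proof (intro sum.cong refl)
    fix k
    have int: "integrable M (\<lambda>\<omega>. \<Theta> \<omega> ^ (k - 1) * exp (- v * \<Theta> \<omega>))"
      by (rule G_integrable[OF _ pos v]) simp
    have "(\<integral>\<^sup>+\<omega>. ennreal (b k \<omega>) \<partial>M) = ennreal (\<integral>\<omega>. b k \<omega> \<partial>M)"
      unfolding b_def using int bnn unfolding b_def by (intro nn_integral_eq_integral) (auto intro!: AE_I2)
    then show "(\<integral>\<^sup>+\<omega>. ennreal (b k \<omega>) \<partial>M) = ennreal (v ^ k / fact k * (\<integral>\<omega>. \<Theta> \<omega> ^ (k - 1) * exp (- v * \<Theta> \<omega>) \<partial>M))"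
      by (simp add: b_def)
  qed
  also have "\<dots> = ennreal (\<Sum>k\<in>{1..n}. v ^ k / fact k * (\<integral>\<omega>. \<Theta> \<omega> ^ (k - 1) * exp (- v * \<Theta> \<omega>) \<partial>M))"
    using v pos by (intro sum_ennreal mult_nonneg_nonneg integral_nonneg_AE AE_I2) auto
  also have "ennreal (LBINT x:{v<..}. laplace_rv M \<Theta> x) + \<dots> = ennreal ((LBINT x:{v<..}. laplace_rv M \<Theta> x) + (\<Sum>k=1..n. v ^ k / fact k * (\<integral>\<omega>. \<Theta> \<omega> ^ (k - 1) * exp (- v * \<Theta> \<omega>) \<partial>M)))"
  proof (rule ennreal_plus[symmetric])
    show "0 \<le> (LBINT x:{v<..}. laplace_rv M \<Theta> x)"
      unfolding set_lebesgue_integral_def by (intro Bochner_Integration.integral_nonneg) (auto simp: laplace_rv_def)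
    show "0 \<le> (\<Sum>k=1..n. v ^ k / fact k * (\<integral>\<omega>. \<Theta> \<omega> ^ (k - 1) * exp (- v * \<Theta> \<omega>) \<partial>M))"
      using v pos by (intro sum_nonneg mult_nonneg_nonneg integral_nonneg_AE AE_I2) auto
  qed
  finally show ?thesis .
qed


theorem corollary4:
  fixes M :: "'a measure" and \<Theta> :: "'a \<Rightarrow> real" and Z :: "nat \<Rightarrow> 'a \<Rightarrow> real"
    and n :: nat and \<kappa> :: real and i :: nat
  assumes "prob_space M"
    and "n \<ge> 2"
    and "\<exists>f. distributed M lborel \<Theta> f"
    and "\<forall>\<omega>\<in>space M. \<Theta> \<omega> > 0"
    and "set_integrable lborel {0<..} (laplace_rv M \<Theta>)"
    and "\<forall>j\<in>{1..n}. distributed M lborel (Z j) (exponential_density 1)"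
    and "prob_space.indep_vars M (\<lambda>_. borel) (\<lambda>j. if j = 0 then \<Theta> else Z j) {0..n}"
    and "0 < \<kappa>" and "\<kappa> < 1"
    and "i \<in> {1..n}"
  shows "TVaR M \<kappa> (\<lambda>\<omega>. Z i \<omega> / \<Theta> \<omega>) (\<lambda>\<omega>. \<Sum>j=1..n. Z j \<omega> / \<Theta> \<omega>) =
    1 / (1 - \<kappa>) * (\<Sum>\<nu>=1..n. (-1) ^ (\<nu> + 1) *
         (VaR M \<kappa> (\<lambda>\<omega>. \<Sum>j=1..n. Z j \<omega> / \<Theta> \<omega>)) ^ \<nu> / fact \<nu> *
         (deriv ^^ (\<nu> - 1)) (laplace_rv M \<Theta>) (VaR M \<kappa> (\<lambda>\<omega>. \<Sum>j=1..n. Z j \<omega> / \<Theta> \<omega>)))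
    + 1 / (1 - \<kappa>) * (LBINT x:{VaR M \<kappa> (\<lambda>\<omega>. \<Sum>j=1..n. Z j \<omega> / \<Theta> \<omega>)<..}. laplace_rv M \<Theta> x)"
  proof -
  interpret P: prob_space M by (rule assms(1))
  obtain f where fd: "distributed M lborel \<Theta> f" using assms(3) by blast
  have \<Theta>m: "\<Theta> \<in> borel_measurable M" using distributed_measurable[OF fd] by simp
  note pos = assms(4)
  define v where "v = VaR M \<kappa> (\<lambda>\<omega>. \<Sum>j=1..n. Z j \<omega> / \<Theta> \<omega>)"
  have v0: "0 < v" and PA: "P.prob {\<omega>\<in>space M. v < (\<Sum>j=1..n. Z j \<omega> / \<Theta> \<omega>)} = 1 - \<kappa>"
    using P.var_part[OF \<Theta>m pos assms(2) assms(6) assms(7) assms(8) assms(9)] unfolding v_def by auto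
  have iI: "i \<in> {1..n}" by (rule assms(10))
  have Zd: "distributed M lborel (Z i) (exponential_density 1)" using assms(6) iI by blast
  have Zim[measurable]: "Z i \<in> borel_measurable M" using distributed_measurable[OF Zd] by simp
  have Zm: "Z j \<in> borel_measurable M" if "j \<in> {1..n}" for j
  proof -
    have "distributed M lborel (Z j) (exponential_density 1)" using assms(6) that by blast
    from distributed_measurable[OF this] show ?thesis by simp
  qed
  have Sm[measurable]: "(\<lambda>\<omega>. \<Sum>j=1..n. Z j \<omega> / \<Theta> \<omega>) \<in> borel_measurable M"
    using Zm \<Theta>m by (intro borel_measurable_sum borel_measurable_divide) auto
  have Znn: "AE \<omega> in M. 0 \<le> Z i \<omega>"
  proof -
    have "AE x in lborel. 0 < ennreal (exponential_density 1 x) \<longrightarrow> 0 \<le> x"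
      by (intro AE_I2) (auto simp: exponential_density_def)
    then show ?thesis using P.distributed_AE2[OF Zd, of "\<lambda>x. 0 \<le> x"] by simp
  qed
  define LB where "LB = (LBINT x:{v<..}. laplace_rv M \<Theta> x)"
  define G where "G = (\<lambda>k. \<integral>\<omega>. \<Theta> \<omega> ^ k * exp (- v * \<Theta> \<omega>) \<partial>M)"
  have num: "(\<integral>\<omega>. Z i \<omega> / \<Theta> \<omega> * indicator {\<omega>\<in>space M. v < (\<Sum>j=1..n. Z j \<omega> / \<Theta> \<omega>)} \<omega> \<partial>M)
      = LB + (\<Sum>k=1..n. v ^ k / fact k * G (k - 1))"
  proof -
    have "(\<integral>\<omega>. Z i \<omega> / \<Theta> \<omega> * indicator {\<omega>\<in>space M. v < (\<Sum>j=1..n. Z j \<omega> / \<Theta> \<omega>)} \<omega> \<partial>M)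
      = enn2real (\<integral>\<^sup>+\<omega>. ennreal (Z i \<omega> / \<Theta> \<omega> * indicator {\<omega>\<in>space M. v < (\<Sum>j=1..n. Z j \<omega> / \<Theta> \<omega>)} \<omega>) \<partial>M)"
    proof (rule integral_eq_nn_integral)
      show "(\<lambda>\<omega>. Z i \<omega> / \<Theta> \<omega> * indicator {\<omega>\<in>space M. v < (\<Sum>j=1..n. Z j \<omega> / \<Theta> \<omega>)} \<omega>) \<in> borel_measurable M"
        using \<Theta>m by measurable
      show "AE \<omega> in M. 0 \<le> Z i \<omega> / \<Theta> \<omega> * indicator {\<omega>\<in>space M. v < (\<Sum>j=1..n. Z j \<omega> / \<Theta> \<omega>)} \<omega>"
        using Znn AE_space
      proof eventually_elim
        case (elim \<omega>) then show ?case using pos by (auto split: split_indicator)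
      qed
    qed
    also have "(\<integral>\<^sup>+\<omega>. ennreal (Z i \<omega> / \<Theta> \<omega> * indicator {\<omega>\<in>space M. v < (\<Sum>j=1..n. Z j \<omega> / \<Theta> \<omega>)} \<omega>) \<partial>M)
      = (\<integral>\<^sup>+\<omega>. ennreal (if v < (\<Sum>j=1..n. Z j \<omega> / \<Theta> \<omega>) then Z i \<omega> / \<Theta> \<omega> else 0) \<partial>M)"
      by (intro nn_integral_cong) (simp split: split_indicator)
    also have "\<dots> = (\<integral>\<^sup>+\<omega>. ennreal ((\<Sum>k\<le>n. (v * \<Theta> \<omega>) ^ k * exp (- (v * \<Theta> \<omega>)) / fact k) / \<Theta> \<omega>) \<partial>M)"
      by (rule P.main_num[OF \<Theta>m pos assms(2) assms(6) assms(7) v0 iI])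
    also have "\<dots> = ennreal (LB + (\<Sum>k=1..n. v ^ k / fact k * G (k - 1)))"
      unfolding LB_def G_def by (rule P.sum_eval[OF \<Theta>m pos v0 assms(5)])
    also have "enn2real \<dots> = LB + (\<Sum>k=1..n. v ^ k / fact k * G (k - 1))"
    proof (rule enn2real_ennreal)
      have "0 \<le> LB" unfolding LB_def set_lebesgue_integral_def
        by (intro Bochner_Integration.integral_nonneg) (auto simp: laplace_rv_def)
      moreover have "0 \<le> (\<Sum>k=1..n. v ^ k / fact k * G (k - 1))"
        unfolding G_def using v0 pos by (intro sum_nonneg mult_nonneg_nonneg integral_nonneg_AE AE_I2) auto
      ultimately show "0 \<le> LB + (\<Sum>k=1..n. v ^ k / fact k * G (k - 1))" by simp
    qed
    finally show ?thesis .
  qed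
  have dsum: "(\<Sum>\<nu>=1..n. (-1) ^ (\<nu> + 1) * v ^ \<nu> / fact \<nu> * (deriv ^^ (\<nu> - 1)) (laplace_rv M \<Theta>) v)
      = (\<Sum>k=1..n. v ^ k / fact k * G (k - 1))"
  proof (intro sum.cong refl)
    fix k assume k: "k \<in> {1..n}"
    have d: "(deriv ^^ (k - 1)) (laplace_rv M \<Theta>) v = (-1) ^ (k - 1) * G (k - 1)"
      unfolding G_def by (rule P.deriv_iter_laplace[OF \<Theta>m pos v0])
    have "(-1::real) ^ (k + 1) = (-1) ^ (k - 1)"
    proof -
      obtain m where m: "k = Suc m" using k by (cases k) auto
      show ?thesis unfolding m by simp
    qed
    moreover have "(-1::real) ^ (k - 1) * (-1) ^ (k - 1) = 1"
      by (simp add: power_mult_distrib[symmetric])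
    ultimately show "(-1) ^ (k + 1) * v ^ k / fact k * (deriv ^^ (k - 1)) (laplace_rv M \<Theta>) v = v ^ k / fact k * G (k - 1)"
      unfolding d by (simp add: algebra_simps)
  qed
  have k1: "1 - \<kappa> \<noteq> 0" using assms(9) by simp
  have T: "TVaR M \<kappa> (\<lambda>\<omega>. Z i \<omega> / \<Theta> \<omega>) (\<lambda>\<omega>. \<Sum>j=1..n. Z j \<omega> / \<Theta> \<omega>)
      = (LB + (\<Sum>k=1..n. v ^ k / fact k * G (k - 1))) / (1 - \<kappa>)"
    unfolding TVaR_def Let_def v_def[symmetric] num PA ..
  show ?thesis
    unfolding T v_def[symmetric] LB_def[symmetric] dsum
    using k1 by (simp add: add_divide_distrib)
qed

end
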